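(* In the reset-button collector with equal standard probabilities $p_{i,n}=q_n/n$ for $1\le i\le n$, assume $\rho_nn\log n\to0$. Then for every $y\in\mathbb R$, $\mathbb P(T_n\le n\log n+ny)\to\exp(-e^{-y})$; equivalently $(T_n-n\log n)/n\Rightarrow G$ with $\mathbb P(G\le y)=\exp(-e^{-y})$.
   Context: Reset-button collector: fix $n\ge1$. There are standard coupons $1,\dots,n$ and a reset coupon. At each discrete time $t=1,2,\dots$ one coupon is sampled independently: the reset coupon with probability $\rho_n\in(0,1)$, standard coupon $i$ with probability $p_{i,n}$, where $\sum_ip_{i,n}=q_n:=1-\rho_n$. Starting from the empty collection, drawn standard coupons are added; a reset empties the collection and collecting continues. $T_n$ is the first time all $n$ standard coupons are present. *)

theory Defs
  imports Complex_Main
begin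

text \<open>Reset-button collector. Coupons are encoded as natural numbers:
  0 is the reset coupon, 1..n are the standard coupons.
  A run of length t is a list of draws in {0..n}.\<close>

definition collect_step :: "nat set \<Rightarrow> nat \<Rightarrow> nat set" where
  "collect_step S c = (if c = 0 then {} else insert c S)"

definition collection :: "nat list \<Rightarrow> nat set" where
  "collection w = foldl collect_step {} w"

definition draw_prob :: "real \<Rightarrow> (nat \<Rightarrow> real) \<Rightarrow> nat \<Rightarrow> real" where
  "draw_prob rho p c = (if c = 0 then rho else p c)"

text \<open>The event T_n \<le> t: among the first t draws, at some time k \<le> t all n standard
  coupons are present.\<close>
definition completes_by :: "nat \<Rightarrow> nat \<Rightarrow> nat list \<Rightarrow> bool" where
  "completes_by n t w = (\<exists>k\<le>t. collection (take k w) = {1..n})"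

text \<open>P(T_n \<le> t), computed as the probability of the event over the first t i.i.d. draws.\<close>
definition reset_cdf :: "nat \<Rightarrow> real \<Rightarrow> (nat \<Rightarrow> real) \<Rightarrow> nat \<Rightarrow> real" where
  "reset_cdf n rho p t =
     (\<Sum>w\<in>{w. set w \<subseteq> {0..n} \<and> length w = t \<and> completes_by n t w}.
        \<Prod>c\<leftarrow>w. draw_prob rho p c)"

end

theory Submission
  imports Defs "HOL-Analysis.Analysis" "HOL-Real_Asymp.Real_Asymp"
begin


lemma prod_list_const:
  "(\<forall>x\<in>set w. f x = c) \<Longrightarrow> prod_list (map f w) = c ^ length w"
  by (induction w) auto

lemma lists_Suc_eq:
  "{w. set w \<subseteq> A \<and> length w = Suc t} = (\<lambda>(x,w). x # w) ` (A \<times> {w. set w \<subseteq> A \<and> length w = t})"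
proof (rule set_eqI, rule iffI)
  fix w assume "w \<in> {w. set w \<subseteq> A \<and> length w = Suc t}"
  then show "w \<in> (\<lambda>(x,w). x # w) ` (A \<times> {w. set w \<subseteq> A \<and> length w = t})"
    by (cases w) (auto simp: image_iff)
qed auto

lemma sum_lists_prod:
  fixes f :: "'a \<Rightarrow> real"
  assumes "finite A"
  shows "(\<Sum>w\<in>{w. set w \<subseteq> A \<and> length w = t}. prod_list (map f w)) = (sum f A) ^ t"
proof (induction t)
  case 0
  have "{w. set w \<subseteq> A \<and> length w = 0} = {[]}" by auto
  then show ?case by simp
next
  case (Suc t)
  let ?L = "{w. set w \<subseteq> A \<and> length w = t}"
  have inj: "inj_on (\<lambda>(x,w). x # w) (A \<times> ?L)" by (auto simp: inj_on_def)
  have "(\<Sum>w\<in>{w. set w \<subseteq> A \<and> length w = Suc t}. prod_list (map f w))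
     = (\<Sum>p\<in>A \<times> ?L. prod_list (map f ((\<lambda>(x,w). x # w) p)))"
    unfolding lists_Suc_eq by (subst sum.reindex[OF inj]) (simp add: comp_def)
  also have "\<dots> = (\<Sum>x\<in>A. \<Sum>w\<in>?L. f x * prod_list (map f w))"
    by (simp add: sum.cartesian_product split_def)
  also have "\<dots> = (\<Sum>x\<in>A. f x) * (\<Sum>w\<in>?L. prod_list (map f w))"
    by (simp add: sum_product)
  finally show ?case using Suc by simp
qed

lemma foldl_collect_no0:
  "0 \<notin> set w \<Longrightarrow> foldl collect_step S w = S \<union> set w"
  by (induction w arbitrary: S) (auto simp: collect_step_def)

lemma collection_no0: "0 \<notin> set w \<Longrightarrow> collection w = set w"
  by (simp add: collection_def foldl_collect_no0)

lemma decomp: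
  fixes rho :: real and n t :: nat
  assumes n: "n \<ge> 1" and rho: "0 \<le> rho" "rho \<le> 1"
  defines "q \<equiv> 1 - rho"
  shows "\<exists>E. reset_cdf n rho (\<lambda>i. q / real n) t
            = q ^ t * (real (card {w. set w = {1..n} \<and> length w = t}) / real n ^ t) + E
          \<and> 0 \<le> E \<and> E \<le> 1 - q ^ t"
proof -
  let ?P = "\<lambda>w. \<Prod>c\<leftarrow>w. draw_prob rho (\<lambda>i. q / real n) c"
  define X where "X = {w. set w \<subseteq> {0..n} \<and> length w = t \<and> completes_by n t w}"
  define A where "A = {w. set w = {1..n} \<and> length w = t}"
  define Z where "Z = {w. set w \<subseteq> {0..n} \<and> length w = t}"
  define Z1 where "Z1 = {w. set w \<subseteq> {1..n} \<and> length w = t}"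
  have finZ: "finite Z" unfolding Z_def by (rule finite_lists_length_eq) simp
  have finZ1: "finite Z1" unfolding Z1_def by (rule finite_lists_length_eq) simp
  have XZ: "X \<subseteq> Z" unfolding X_def Z_def by auto
  have finX: "finite X" using XZ finZ finite_subset by blast
  have Z1Z: "Z1 \<subseteq> Z" unfolding Z1_def Z_def by auto
  have Pnn: "?P w \<ge> 0" for w
    using rho by (intro prod_list_nonneg) (auto simp: draw_prob_def q_def)
  have XA: "X \<inter> {w. 0 \<notin> set w} = A"
  proof (rule set_eqI, rule iffI)
    fix w assume w: "w \<in> X \<inter> {w. 0 \<notin> set w}"
    then obtain k where k: "k \<le> t" "collection (take k w) = {1..n}" and w0: "0 \<notin> set w"
      and ws: "set w \<subseteq> {0..n}" and wl: "length w = t"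
      unfolding X_def completes_by_def by auto
    have "0 \<notin> set (take k w)" using w0 by (meson in_set_takeD)
    then have "set (take k w) = {1..n}" using k collection_no0 by metis
    then have "{1..n} \<subseteq> set w" by (metis set_take_subset)
    moreover have "set w \<subseteq> {1..n}" using ws w0 by (auto simp: subset_iff) (metis atLeastAtMost_iff le_0_eq not_less_eq_eq)
    ultimately show "w \<in> A" using wl unfolding A_def by auto
  next
    fix w assume "w \<in> A"
    then have ws: "set w = {1..n}" and wl: "length w = t" unfolding A_def by auto
    have w0: "0 \<notin> set w" using ws by auto
    have "collection (take t w) = {1..n}" using wl ws collection_no0[OF w0] by simp
    then show "w \<in> X \<inter> {w. 0 \<notin> set w}" unfolding X_def completes_by_def using ws wl w0 by auto
  qed
  have PA: "?P w = (q / real n) ^ t" if "w \<in> A" for w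
    using that unfolding A_def
    by (subst prod_list_const[where c = "q / real n"]) (auto simp: draw_prob_def)
  have sumA: "sum ?P A = q ^ t * (real (card A) / real n ^ t)"
    using PA by (simp add: power_divide)
  define E where "E = sum ?P (X - {w. 0 \<notin> set w})"
  have split: "sum ?P X = sum ?P A + E"
    unfolding E_def XA[symmetric] using finX by (rule sum.Int_Diff)
  have E0: "0 \<le> E" unfolding E_def using Pnn by (intro sum_nonneg) auto
  have sub: "X - {w. 0 \<notin> set w} \<subseteq> Z - Z1"
    unfolding X_def Z_def Z1_def by auto
  have "E \<le> sum ?P (Z - Z1)"
    unfolding E_def using sub finZ Pnn by (intro sum_mono2) auto
  also have "\<dots> = sum ?P Z - sum ?P Z1" using Z1Z finZ by (intro sum_diff) auto
  also have "sum ?P Z = (\<Sum>c\<in>{0..n}. draw_prob rho (\<lambda>i. q / real n) c) ^ t"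
    unfolding Z_def by (rule sum_lists_prod) simp
  also have "(\<Sum>c\<in>{0..n}. draw_prob rho (\<lambda>i. q / real n) c) = 1"
  proof -
    have "{0..n} = insert 0 {1..n}" by auto
    then have "(\<Sum>c\<in>{0..n}. draw_prob rho (\<lambda>i. q / real n) c)
        = rho + (\<Sum>c\<in>{1..n}. draw_prob rho (\<lambda>i. q / real n) c)" by (simp add: draw_prob_def)
    also have "(\<Sum>c\<in>{1..n}. draw_prob rho (\<lambda>i. q / real n) c) = q"
      using n by (simp add: draw_prob_def)
    finally show ?thesis by (simp add: q_def)
  qed
  also have "sum ?P Z1 = (\<Sum>c\<in>{1..n}. draw_prob rho (\<lambda>i. q / real n) c) ^ t"
    unfolding Z1_def by (rule sum_lists_prod) simp
  also have "(\<Sum>c\<in>{1..n}. draw_prob rho (\<lambda>i. q / real n) c) = q"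
    using n by (simp add: draw_prob_def)
  finally have E1: "E \<le> 1 - q ^ t" by simp
  have "reset_cdf n rho (\<lambda>i. q / real n) t = sum ?P X"
    unfolding reset_cdf_def X_def by simp
  then show ?thesis using split sumA E0 E1 unfolding A_def by auto
qed



lemma card_lists_split:
  fixes S :: "'a set"
  assumes "finite S"
  shows "real (card S) ^ t = (\<Sum>T\<in>Pow S. real (card {w. set w = T \<and> length w = t}))"
proof -
  let ?L = "{w. set w \<subseteq> S \<and> length w = t}"
  have fin: "finite ?L" using assms by (rule finite_lists_length_eq)
  have "real (card S) ^ t = real (card ?L)" by (simp add: card_lists_length_eq assms)
  also have "\<dots> = (\<Sum>w\<in>?L. 1)" by simp
  also have "\<dots> = (\<Sum>T\<in>Pow S. \<Sum>w\<in>{w\<in>?L. set w = T}. 1)"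
    using assms fin by (intro sum.group[symmetric]) auto
  also have "\<dots> = (\<Sum>T\<in>Pow S. real (card {w. set w = T \<and> length w = t}))"
  proof (rule sum.cong[OF refl])
    fix T assume "T \<in> Pow S"
    then have "{w\<in>?L. set w = T} = {w. set w = T \<and> length w = t}" by auto
    then show "(\<Sum>w\<in>{w\<in>?L. set w = T}. 1) = real (card {w. set w = T \<and> length w = t})" by simp
  qed
  finally show ?thesis .
qed

lemma count_surj_pow:
  fixes S :: "'a set"
  assumes "finite S"
  shows "real (card {w. set w = S \<and> length w = t})
       = (\<Sum>T\<in>Pow S. (-1) ^ (card S - card T) * real (card T) ^ t)"
  using inclusion_exclusion_mobius[where f = "\<lambda>S. real (card {w. set w = S \<and> length w = t})"
      and g = "\<lambda>S. real (card S) ^ t", OF card_lists_split assms] .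

lemma count_surj:
  "real (card {w. set w = {1..n} \<and> length w = t})
     = (\<Sum>k\<le>n. (-1) ^ k * real (n choose k) * real (n - k) ^ t)"
proof -
  let ?S = "{1..n::nat}"
  have "real (card {w. set w = ?S \<and> length w = t})
       = (\<Sum>T\<in>Pow ?S. (-1) ^ (n - card T) * real (card T) ^ t)"
    by (subst count_surj_pow) auto
  also have "\<dots> = (\<Sum>j\<le>n. \<Sum>T\<in>{T\<in>Pow ?S. card T = j}. (-1) ^ (n - card T) * real (card T) ^ t)"
    by (rule sum.group[symmetric]) (auto simp: card_mono[of ?S, simplified])
  also have "\<dots> = (\<Sum>j\<le>n. real (n choose j) * ((-1) ^ (n - j) * real j ^ t))"
  proof (rule sum.cong[OF refl])
    fix j
    have "{T\<in>Pow ?S. card T = j} = {T. T \<subseteq> ?S \<and> card T = j}" by auto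
    moreover have "card {T. T \<subseteq> ?S \<and> card T = j} = n choose j" by (subst n_subsets) auto
    ultimately show "(\<Sum>T\<in>{T\<in>Pow ?S. card T = j}. (-1) ^ (n - card T) * real (card T) ^ t)
        = real (n choose j) * ((-1) ^ (n - j) * real j ^ t)" by simp
  qed
  also have "\<dots> = (\<Sum>k\<le>n. (-1) ^ k * real (n choose k) * real (n - k) ^ t)"
    by (rule sum.reindex_bij_witness[where i = "\<lambda>k. n - k" and j = "\<lambda>j. n - j"])
       (auto simp: binomial_symmetric[symmetric])
  finally show ?thesis .
qed



lemma choose_fact_prod: "(n choose k) * fact k = (\<Prod>i<k. (n - i :: nat))"
proof (induction k arbitrary: n)
  case 0 then show ?case by simp
next
  case (Suc k)
  have "(n choose Suc k) * fact (Suc k) = (Suc k * (n choose Suc k)) * fact k" by (simp add: algebra_simps)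
  also have "\<dots> = n * ((n - 1 choose k) * fact k)" by (simp only: binomial_absorption mult.assoc)
  also have "\<dots> = n * (\<Prod>i<k. (n - 1 - i))" by (simp add: Suc)
  also have "\<dots> = (\<Prod>i<Suc k. (n - i))" by (subst prod.lessThan_Suc_shift) simp
  finally show ?case .
qed

lemma choose_real_prod:
  assumes "k \<le> n" "n > 0"
  shows "real (n choose k) = real n ^ k * (\<Prod>i<k. 1 - real i / real n) / fact k"
proof -
  have "real (n choose k) * fact k = real ((n choose k) * fact k)" by simp
  also have "\<dots> = (\<Prod>i<k. real (n - i))" by (simp only: choose_fact_prod of_nat_prod)
  also have "\<dots> = (\<Prod>i<k. real n * (1 - real i / real n))"
    using assms by (intro prod.cong) (auto simp: of_nat_diff field_simps)
  also have "\<dots> = real n ^ k * (\<Prod>i<k. 1 - real i / real n)" by (simp add: prod.distrib)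
  finally show ?thesis by (simp add: field_simps)
qed

locale gumbel =
  fixes y :: real
begin

definition T :: "nat \<Rightarrow> nat" where
  "T n = nat \<lfloor>real n * ln (real n) + real n * y\<rfloor>"

definition a :: "nat \<Rightarrow> nat \<Rightarrow> real" where
  "a k n = (-1) ^ k * real (n choose k) * (1 - real k / real n) ^ T n"

lemma T_lower: "real (T n) \<ge> real n * ln (real n) + real n * y - 1"
  unfolding T_def by linarith

lemma T_upper: "real (T n) \<le> max 0 (real n * ln (real n) + real n * y)"
  unfolding T_def by linarith

lemma T_upper2: "n \<ge> 1 \<Longrightarrow> real (T n) \<le> real n * ln (real n) + real n * \<bar>y\<bar>"
proof -
  assume n: "n \<ge> 1"
  have "0 \<le> real n * ln (real n)" using n by simp
  moreover have "real n * y \<le> real n * \<bar>y\<bar>" by (intro mult_left_mono) auto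
  moreover have "0 \<le> real n * \<bar>y\<bar>" by simp
  ultimately show ?thesis using T_upper[of n] by linarith
qed

lemma a_bound:
  assumes n: "n \<ge> 1"
  shows "\<bar>a k n\<bar> \<le> exp (1 - y) ^ k / fact k"
proof (cases "k \<le> n")
  case False
  then show ?thesis by (simp add: a_def binomial_eq_0)
next
  case True
  have npos: "real n > 0" using n by simp
  have x0: "0 \<le> 1 - real k / real n" using True npos by (simp add: field_simps)
  have "\<bar>a k n\<bar> = real (n choose k) * (1 - real k / real n) ^ T n"
    using x0 by (simp add: a_def abs_mult power_abs)
  also have "\<dots> \<le> (real n ^ k / fact k) * exp (- real k / real n) ^ T n"
  proof (intro mult_mono)
    have "real ((n choose k) * fact k) \<le> real (n ^ k)"
      by (simp only: of_nat_le_iff binomial_fact_pow)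
    then show "real (n choose k) \<le> real n ^ k / fact k"
      by (simp add: field_simps)
    have "1 - real k / real n \<le> exp (- real k / real n)"
      using exp_ge_add_one_self[of "- real k / real n"] by simp
    then show "(1 - real k / real n) ^ T n \<le> exp (- real k / real n) ^ T n"
      using x0 by (intro power_mono) auto
  qed (use x0 in auto)
  also have "\<dots> = exp (real k * (ln (real n) - real (T n) / real n)) / fact k"
  proof -
    have "real n ^ k = exp (real k * ln (real n))"
      using npos by (simp add: exp_of_nat_mult)
    moreover have "exp (- real k / real n) ^ T n = exp (- real k * real (T n) / real n)"
      by (simp add: exp_of_nat_mult[symmetric] field_simps)
    ultimately show ?thesis by (simp add: exp_add[symmetric] field_simps)
  qed
  also have "\<dots> \<le> exp (real k * (1 - y)) / fact k"
  proof -
    have "ln (real n) + y - 1 / real n = (real n * ln (real n) + real n * y - 1) / real n"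
      using npos by (simp add: field_simps)
    also have "\<dots> \<le> real (T n) / real n"
      using T_lower[of n] npos by (intro divide_right_mono) auto
    finally have "real (T n) / real n \<ge> ln (real n) + y - 1 / real n" .
    moreover have "1 / real n \<le> 1" using n by simp
    ultimately have "ln (real n) - real (T n) / real n \<le> 1 - y" by linarith
    then have "real k * (ln (real n) - real (T n) / real n) \<le> real k * (1 - y)"
      by (intro mult_left_mono) auto
    then show ?thesis by (intro divide_right_mono) auto
  qed
  also have "\<dots> = exp (1 - y) ^ k / fact k"
    by (simp add: exp_of_nat_mult[symmetric])
  finally show ?thesis .
qed

lemma ev_pos: "eventually (\<lambda>n::nat. real n * ln (real n) + real n * y \<ge> 0) at_top"
  by real_asymp

lemma T_over_n: "(\<lambda>n. real (T n) / real n - ln (real n)) \<longlonglongrightarrow> y"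
proof (rule tendsto_sandwich[where f = "\<lambda>n. y - 1 / real n" and h = "\<lambda>n. y"])
  show "eventually (\<lambda>n. y - 1 / real n \<le> real (T n) / real n - ln (real n)) sequentially"
    using eventually_gt_at_top[of 0]
  proof eventually_elim
    case (elim n)
    have "ln (real n) + y - 1 / real n = (real n * ln (real n) + real n * y - 1) / real n"
      using elim by (simp add: field_simps)
    also have "\<dots> \<le> real (T n) / real n"
      using T_lower[of n] elim by (intro divide_right_mono) auto
    finally show ?case by simp
  qed
  show "eventually (\<lambda>n. real (T n) / real n - ln (real n) \<le> y) sequentially"
    using eventually_conj[OF eventually_gt_at_top[of 0] ev_pos]
  proof eventually_elim
    case (elim n)
    then have "real (T n) \<le> real n * ln (real n) + real n * y" using T_upper[of n] by simp
    then have "real (T n) / real n \<le> ln (real n) + y" using elim by (simp add: field_simps)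
    then show ?case by simp
  qed
  show "(\<lambda>n. y - 1 / real n) \<longlonglongrightarrow> y" by real_asymp
qed simp

lemma err_lim: "(\<lambda>n. real (T n) * (ln (1 - real k / real n) + real k / real n)) \<longlonglongrightarrow> 0"
proof (rule Lim_null_comparison)
  let ?B = "\<lambda>n. 2 * real k ^ 2 * (ln (real n) / real n) + 2 * real k ^ 2 * \<bar>y\<bar> * (1 / real n)"
  show "eventually (\<lambda>n. norm (real (T n) * (ln (1 - real k / real n) + real k / real n)) \<le> ?B n) sequentially"
    using eventually_ge_at_top[of "max 1 (2 * k)"]
  proof eventually_elim
    case (elim n)
    then have n1: "n \<ge> 1" and n2: "2 * k \<le> n" by auto
    have npos: "real n > 0" using n1 by simp
    have "\<bar>- real k / real n\<bar> \<le> 1/2" using n2 npos by (simp add: field_simps)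
    from abs_ln_one_plus_x_minus_x_bound[OF this]
    have e: "\<bar>ln (1 - real k / real n) + real k / real n\<bar> \<le> 2 * (real k / real n)^2" by simp
    have "norm (real (T n) * (ln (1 - real k / real n) + real k / real n))
        = real (T n) * \<bar>ln (1 - real k / real n) + real k / real n\<bar>" by (simp add: abs_mult)
    also have "\<dots> \<le> (real n * ln (real n) + real n * \<bar>y\<bar>) * (2 * (real k / real n)^2)"
      using e T_upper2[OF n1] by (intro mult_mono) auto
    also have "\<dots> = ?B n" using npos by (simp add: field_simps power2_eq_square)
    finally show ?case .
  qed
  have "(\<lambda>n::nat. ln (real n) / real n) \<longlonglongrightarrow> 0" by real_asymp
  moreover have "(\<lambda>n::nat. 1 / real n) \<longlonglongrightarrow> 0" by real_asymp
  ultimately show "?B \<longlonglongrightarrow> 0"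
    by (intro tendsto_add_zero tendsto_mult_right_zero)
qed

lemma main_part_lim: "(\<lambda>n. real n ^ k * (1 - real k / real n) ^ T n) \<longlonglongrightarrow> exp (- y) ^ k"
proof -
  have "(\<lambda>n. - real k * (real (T n) / real n - ln (real n))
            + real (T n) * (ln (1 - real k / real n) + real k / real n)) \<longlonglongrightarrow> - real k * y + 0"
    by (intro tendsto_intros T_over_n err_lim)
  then have lim: "(\<lambda>n. exp (- real k * (real (T n) / real n - ln (real n))
            + real (T n) * (ln (1 - real k / real n) + real k / real n))) \<longlonglongrightarrow> exp (- real k * y)"
    by (intro tendsto_exp) simp
  have "eventually (\<lambda>n. exp (- real k * (real (T n) / real n - ln (real n))
            + real (T n) * (ln (1 - real k / real n) + real k / real n))
       = real n ^ k * (1 - real k / real n) ^ T n) sequentially"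
    using eventually_gt_at_top[of k]
  proof eventually_elim
    case (elim n)
    then have npos: "real n > 0" and x: "1 - real k / real n > 0" by (auto simp: field_simps)
    have "real n ^ k * (1 - real k / real n) ^ T n
        = exp (real k * ln (real n)) * exp (real (T n) * ln (1 - real k / real n))"
      using npos x by (simp add: exp_of_nat_mult)
    also have "\<dots> = exp (- real k * (real (T n) / real n - ln (real n))
            + real (T n) * (ln (1 - real k / real n) + real k / real n))"
      using npos by (simp add: exp_add[symmetric] field_simps)
    finally show ?case by simp
  qed
  from Lim_transform_eventually[OF lim this] show ?thesis
    by (simp add: exp_of_nat_mult[symmetric] mult.commute)
qed

lemma a_lim: "(\<lambda>n. a k n) \<longlonglongrightarrow> (- exp (- y)) ^ k / fact k"
proof -
  have "(\<lambda>n. (-1) ^ k / fact k * (\<Prod>i<k. 1 - real i / real n) * (real n ^ k * (1 - real k / real n) ^ T n))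
      \<longlonglongrightarrow> (-1) ^ k / fact k * (\<Prod>i<k. 1 - 0) * exp (- y) ^ k"
  proof -
    have "(\<lambda>n. real i / real n) \<longlonglongrightarrow> 0" for i :: nat by real_asymp
    then have "(\<lambda>n. \<Prod>i<k. 1 - real i / real n) \<longlonglongrightarrow> (\<Prod>i<k. 1 - (0::real))"
      by (intro tendsto_prod tendsto_diff tendsto_const) auto
    then show ?thesis by (intro tendsto_mult tendsto_const main_part_lim)
  qed
  moreover have "eventually (\<lambda>n. (-1) ^ k / fact k * (\<Prod>i<k. 1 - real i / real n) * (real n ^ k * (1 - real k / real n) ^ T n)
       = a k n) sequentially"
    using eventually_ge_at_top[of "max 1 k"]
  proof eventually_elim
    case (elim n)
    then show ?case unfolding a_def using choose_real_prod[of k n] by (simp add: field_simps)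
  qed
  ultimately have "(\<lambda>n. a k n) \<longlonglongrightarrow> (-1) ^ k / fact k * (\<Prod>i<k. 1 - (0::real)) * exp (- y) ^ k"
    by (rule Lim_transform_eventually)
  then have "(\<lambda>n. a k n) \<longlonglongrightarrow> (-1) ^ k / fact k * exp (- y) ^ k" by simp
  then show ?thesis by (simp add: power_minus' field_simps)
qed

lemma sum_a_lim: "(\<lambda>n. \<Sum>k\<le>n. a k n) \<longlonglongrightarrow> exp (- exp (- y))"
proof -
  have "summable (\<lambda>k. exp (1 - y) ^ k / fact k)"
    using exp_converges[of "exp (1 - y)"] by (simp add: sums_iff divide_inverse mult.commute)
  moreover have "eventually (\<lambda>(k, n). norm (a k n) \<le> exp (1 - y) ^ k / fact k) (at_top \<times>\<^sub>F sequentially)"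
    unfolding eventually_prod_sequentially using a_bound by auto
  ultimately have "(\<lambda>n. suminf (\<lambda>k. a k n)) \<longlonglongrightarrow> suminf (\<lambda>k. (- exp (- y)) ^ k / fact k)"
    using tannerys_theorem[where a = a and b = "\<lambda>k. (- exp (- y)) ^ k / fact k", OF a_lim] by auto
  moreover have "suminf (\<lambda>k. (- exp (- y)) ^ k / fact k) = exp (- exp (- y))"
    using exp_converges[of "- exp (- y)"] by (simp add: sums_iff divide_inverse mult.commute)
  moreover have "suminf (\<lambda>k. a k n) = (\<Sum>k\<le>n. a k n)" for n
    by (rule suminf_finite) (auto simp: a_def)
  ultimately show ?thesis by simp
qed

end



theorem mainTheorem11:
  fixes rho :: "nat \<Rightarrow> real"
  assumes "\<And>n. 0 < rho n \<and> rho n < 1"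
    and "(\<lambda>n. rho n * real n * ln (real n)) \<longlonglongrightarrow> 0"
  shows "\<forall>y::real. (\<lambda>n. reset_cdf n (rho n) (\<lambda>i. (1 - rho n) / real n)
            (nat \<lfloor>real n * ln (real n) + real n * y\<rfloor>))
          \<longlonglongrightarrow> exp (- exp (- y))"
proof
  fix y :: real
  interpret g: gumbel y .
  have rho0: "0 < rho n" and rho1: "rho n < 1" for n using assms(1) by auto
  define S where "S n = real (card {w. set w = {1..n} \<and> length w = g.T n}) / real n ^ g.T n" for n
  define Q where "Q n = (1 - rho n) ^ g.T n" for n
  define E where "E n = reset_cdf n (rho n) (\<lambda>i. (1 - rho n) / real n) (g.T n) - Q n * S n" for n
  have E_bounds: "0 \<le> E n \<and> E n \<le> 1 - Q n" if n1: "n \<ge> 1" for n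
  proof -
    obtain E' where "reset_cdf n (rho n) (\<lambda>i. (1 - rho n) / real n) (g.T n) = Q n * S n + E'"
        "0 \<le> E'" "E' \<le> 1 - Q n"
      using decomp[OF n1, of "rho n" "g.T n"] rho0[of n] rho1[of n] unfolding Q_def S_def by auto
    then show ?thesis unfolding E_def by simp
  qed
  have S_eq: "S n = (\<Sum>k\<le>n. g.a k n)" if "n \<ge> 1" for n
  proof -
    have npos: "real n > 0" using that by simp
    have "S n = (\<Sum>k\<le>n. (-1) ^ k * real (n choose k) * real (n - k) ^ g.T n) / real n ^ g.T n"
      unfolding S_def count_surj ..
    also have "\<dots> = (\<Sum>k\<le>n. (-1) ^ k * real (n choose k) * (real (n - k) / real n) ^ g.T n)"
      by (simp add: sum_divide_distrib power_divide)
    also have "\<dots> = (\<Sum>k\<le>n. g.a k n)"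
    proof (rule sum.cong[OF refl])
      fix k assume "k \<in> {..n}"
      then have "real (n - k) / real n = 1 - real k / real n" using npos by (simp add: of_nat_diff field_simps)
      then show "(-1) ^ k * real (n choose k) * (real (n - k) / real n) ^ g.T n = g.a k n"
        unfolding g.a_def by simp
    qed
    finally show ?thesis .
  qed
  have S_lim: "S \<longlonglongrightarrow> exp (- exp (- y))"
    using g.sum_a_lim
  proof (rule Lim_transform_eventually)
    show "eventually (\<lambda>n. (\<Sum>k\<le>n. g.a k n) = S n) sequentially"
      using eventually_ge_at_top[of 1] by eventually_elim (simp add: S_eq)
  qed
  have rn: "(\<lambda>n. rho n * real n) \<longlonglongrightarrow> 0"
  proof (rule tendsto_sandwich[where f = "\<lambda>_. 0" and h = "\<lambda>n. rho n * real n * ln (real n)"])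
    show "eventually (\<lambda>n. 0 \<le> rho n * real n) sequentially"
      using rho0 by (intro always_eventually allI) (simp add: less_imp_le)
    show "eventually (\<lambda>n. rho n * real n \<le> rho n * real n * ln (real n)) sequentially"
      using eventually_ge_at_top[of 3]
    proof eventually_elim
      case (elim n)
      have "exp 1 \<le> (3::real)" using exp_le by simp
      also have "\<dots> \<le> real n" using elim by simp
      finally have "1 \<le> ln (real n)" using elim by (simp add: ln_ge_iff)
      moreover have "0 \<le> rho n * real n" using rho0[of n] by simp
      ultimately show ?case using mult_left_mono[of 1 "ln (real n)" "rho n * real n"] by simp
    qed
  qed (use assms(2) in auto)
  have Q_lim: "Q \<longlonglongrightarrow> 1"
  proof (rule tendsto_sandwich[where f = "\<lambda>n. 1 - (rho n * real n * ln (real n) + \<bar>y\<bar> * (rho n * real n))"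
        and h = "\<lambda>_. 1"])
    show "eventually (\<lambda>n. 1 - (rho n * real n * ln (real n) + \<bar>y\<bar> * (rho n * real n)) \<le> Q n) sequentially"
      using eventually_ge_at_top[of 1]
    proof eventually_elim
      case (elim n)
      have "rho n * real (g.T n) \<le> rho n * (real n * ln (real n) + real n * \<bar>y\<bar>)"
        using g.T_upper2[OF elim] rho0[of n] by (intro mult_left_mono) auto
      moreover have "1 + real (g.T n) * (- rho n) \<le> (1 + - rho n) ^ g.T n"
        using rho1[of n] by (intro Bernoulli_inequality) simp
      ultimately show ?case unfolding Q_def by (simp add: algebra_simps)
    qed
    show "eventually (\<lambda>n. Q n \<le> 1) sequentially"
      unfolding Q_def using rho0 rho1 by (intro always_eventually allI power_le_one) (auto simp: less_imp_le)
    show "(\<lambda>n. 1 - (rho n * real n * ln (real n) + \<bar>y\<bar> * (rho n * real n))) \<longlonglongrightarrow> 1"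
    proof -
      have "(\<lambda>n. 1 - (rho n * real n * ln (real n) + \<bar>y\<bar> * (rho n * real n))) \<longlonglongrightarrow> 1 - (0 + \<bar>y\<bar> * 0)"
        by (intro tendsto_diff tendsto_add tendsto_mult tendsto_const assms(2) rn)
      then show ?thesis by simp
    qed
  qed simp
  have E_lim: "E \<longlonglongrightarrow> 0"
  proof (rule tendsto_sandwich[where f = "\<lambda>_. 0" and h = "\<lambda>n. 1 - Q n"])
    show "eventually (\<lambda>n. 0 \<le> E n) sequentially"
      using eventually_ge_at_top[of 1] by eventually_elim (use E_bounds in auto)
    show "eventually (\<lambda>n. E n \<le> 1 - Q n) sequentially"
      using eventually_ge_at_top[of 1] by eventually_elim (use E_bounds in auto)
    show "(\<lambda>n. 1 - Q n) \<longlonglongrightarrow> 0" using Q_lim by (auto intro!: tendsto_eq_intros)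
  qed simp
  have "(\<lambda>n. Q n * S n + E n) \<longlonglongrightarrow> 1 * exp (- exp (- y)) + 0"
    by (intro tendsto_intros Q_lim S_lim E_lim)
  moreover have "(\<lambda>n. Q n * S n + E n) = (\<lambda>n. reset_cdf n (rho n) (\<lambda>i. (1 - rho n) / real n)
            (nat \<lfloor>real n * ln (real n) + real n * y\<rfloor>))"
    unfolding E_def g.T_def by simp
  ultimately show "(\<lambda>n. reset_cdf n (rho n) (\<lambda>i. (1 - rho n) / real n)
            (nat \<lfloor>real n * ln (real n) + real n * y\<rfloor>)) \<longlonglongrightarrow> exp (- exp (- y))" by simp
qed


end
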